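(* Let $G$ be a transient vertex-transitive graph of degree $d$. Then the Gaussian free field on $G$ is (in law) a linear factor of i.i.d. process.
   Context: With $A$ the adjacency operator and $\delta_o$ the indicator of the root $o$, the Gaussian free field is the $\mathrm{Aut}(G)$-invariant, jointly Gaussian, mean-zero process $(X_v)$ with $\mathrm{cov}(X_o,X_v)=\big(\sum_{k\ge0}(A/d)^k\delta_o\big)(v)$ (the Green function, finite by transience). Linear factor of i.i.d.: with $(Z_u)$ i.i.d. standard normal, $X_v=\sum_u\beta(u)Z_{\Phi(u)}$ for some $\beta\in\ell^2(G)$ invariant under automorphisms fixing $o$, where $\Phi\in\mathrm{Aut}(G)$ with $\Phi(o)=v$. *)

theory Defs
  imports "HOL-Probability.Probability"
begin

definition d_regular_graph :: "('v \<Rightarrow> 'v \<Rightarrow> bool) \<Rightarrow> nat \<Rightarrow> bool" where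
  "d_regular_graph E d \<longleftrightarrow> (\<forall>x y. E x y \<longleftrightarrow> E y x) \<and> (\<forall>x. \<not> E x x)
     \<and> (\<forall>x. finite {y. E x y} \<and> card {y. E x y} = d)"

definition connected_graph :: "('v \<Rightarrow> 'v \<Rightarrow> bool) \<Rightarrow> bool" where
  "connected_graph E \<longleftrightarrow> (\<forall>x y. E\<^sup>*\<^sup>* x y)"

definition graph_aut :: "('v \<Rightarrow> 'v \<Rightarrow> bool) \<Rightarrow> ('v \<Rightarrow> 'v) \<Rightarrow> bool" where
  "graph_aut E \<phi> \<longleftrightarrow> bij \<phi> \<and> (\<forall>x y. E x y \<longleftrightarrow> E (\<phi> x) (\<phi> y))"

definition vertex_transitive :: "('v \<Rightarrow> 'v \<Rightarrow> bool) \<Rightarrow> bool" where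
  "vertex_transitive E \<longleftrightarrow> (\<forall>x y. \<exists>\<phi>. graph_aut E \<phi> \<and> \<phi> x = y)"

text \<open>walk_prob E d k u v = ((A/d)^k delta_u)(v), where (A f)(v) = sum of f over neighbours of v.\<close>

fun walk_prob :: "('v \<Rightarrow> 'v \<Rightarrow> bool) \<Rightarrow> nat \<Rightarrow> nat \<Rightarrow> 'v \<Rightarrow> 'v \<Rightarrow> real" where
  "walk_prob E d 0 u v = (if u = v then 1 else 0)"
| "walk_prob E d (Suc k) u v = (\<Sum>w\<in>{w. E v w}. walk_prob E d k u w) / real d"

definition green :: "('v \<Rightarrow> 'v \<Rightarrow> bool) \<Rightarrow> nat \<Rightarrow> 'v \<Rightarrow> 'v \<Rightarrow> real" where
  "green E d u v = (\<Sum>k. walk_prob E d k u v)"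

text \<open>Transience: the expected number of returns of simple random walk is finite.\<close>

definition transient :: "('v \<Rightarrow> 'v \<Rightarrow> bool) \<Rightarrow> nat \<Rightarrow> bool" where
  "transient E d \<longleftrightarrow> (\<forall>x. summable (\<lambda>k. walk_prob E d k x x))"

definition centered_normal :: "real \<Rightarrow> real measure" where
  "centered_normal s = (if s = 0 then return borel 0 else density lborel (normal_density 0 (sqrt s)))"

text \<open>X (on probability space M) is, in law, the Gaussian free field: a jointly Gaussian,
  mean-zero process with covariance cov(X_u, X_v) = green u v (determined by
  cov(X_o,X_v) and Aut(G)-invariance). Joint Gaussianity with this mean/covariance is
  expressed by: every finite linear combination is centered normal with the corresponding variance.\<close>

definition is_GFF :: "('v \<Rightarrow> 'v \<Rightarrow> bool) \<Rightarrow> nat \<Rightarrow> 'w measure \<Rightarrow> ('v \<Rightarrow> 'w \<Rightarrow> real) \<Rightarrow> bool" where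
  "is_GFF E d M X \<longleftrightarrow> (\<forall>v. X v \<in> borel_measurable M) \<and>
     (\<forall>F (a :: 'v \<Rightarrow> real). finite F \<longrightarrow>
        distr M borel (\<lambda>\<omega>. \<Sum>v\<in>F. a v * X v \<omega>)
          = centered_normal (\<Sum>u\<in>F. \<Sum>v\<in>F. a u * a v * green E d u v))"

definition iid_std_normal :: "'w measure \<Rightarrow> ('v \<Rightarrow> 'w \<Rightarrow> real) \<Rightarrow> bool" where
  "iid_std_normal M Z \<longleftrightarrow> prob_space M \<and> prob_space.indep_vars M (\<lambda>_. borel) Z UNIV
     \<and> (\<forall>u. distributed M lborel (Z u) std_normal_density)"

text \<open>Y = sum_u c u * Z u as an L^2(M)-convergent series (limit along the net of finite sets).\<close>

definition L2_series :: "'w measure \<Rightarrow> ('v \<Rightarrow> real) \<Rightarrow> ('v \<Rightarrow> 'w \<Rightarrow> real) \<Rightarrow> ('w \<Rightarrow> real) \<Rightarrow> bool" where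
  "L2_series M c Z Y \<longleftrightarrow> Y \<in> borel_measurable M \<and>
     (\<forall>\<epsilon>>0. \<exists>F0. finite F0 \<and> (\<forall>F. finite F \<and> F0 \<subseteq> F \<longrightarrow>
        (\<integral>\<^sup>+ \<omega>. ennreal ((Y \<omega> - (\<Sum>u\<in>F. c u * Z u \<omega>))\<^sup>2) \<partial>M) < ennreal \<epsilon>))"

end

theory Submission
  imports Defs "HOL-Computational_Algebra.Formal_Power_Series"
begin


lemma walk_prob_nonneg: "0 \<le> walk_prob E d k u v"
  by (induction k arbitrary: v) (auto intro!: sum_nonneg divide_nonneg_nonneg)

lemma dreg_finite: "d_regular_graph E d \<Longrightarrow> finite {y. E x y}"
  unfolding d_regular_graph_def by blast

lemma walk_prob_Suc': "walk_prob E d (Suc k) u v = (\<Sum>w\<in>{w. E v w}. walk_prob E d k u w) * (1 / real d)"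
  by simp

lemma chapman:
  assumes "d_regular_graph E d"
  shows "(\<integral>\<^sup>+w. ennreal (walk_prob E d i u w * walk_prob E d j w v) \<partial>count_space UNIV)
         = ennreal (walk_prob E d (i+j) u v)"
proof (induction j arbitrary: v)
  case 0
  have "(\<integral>\<^sup>+w. ennreal (walk_prob E d i u w * walk_prob E d 0 w v) \<partial>count_space UNIV)
     = (\<Sum>w\<in>{v}. ennreal (walk_prob E d i u w * walk_prob E d 0 w v))"
    by (rule nn_integral_count_space') auto
  then show ?case by simp
next
  case (Suc j)
  have fin: "finite {w. E v w}" using assms unfolding d_regular_graph_def by blast
  have "(\<integral>\<^sup>+w. ennreal (walk_prob E d i u w * walk_prob E d (Suc j) w v) \<partial>count_space UNIV)
     = (\<integral>\<^sup>+w. ennreal (1 / real d) * (\<Sum>x\<in>{x. E v x}. ennreal (walk_prob E d i u w * walk_prob E d j w x)) \<partial>count_space UNIV)"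
  proof (intro nn_integral_cong)
    fix w
    have "walk_prob E d i u w * walk_prob E d (Suc j) w v
        = (1 / real d) * (\<Sum>x\<in>{x. E v x}. walk_prob E d i u w * walk_prob E d j w x)"
      by (simp add: sum_distrib_left sum_divide_distrib)
    also have "ennreal \<dots> = ennreal (1 / real d) * ennreal (\<Sum>x\<in>{x. E v x}. walk_prob E d i u w * walk_prob E d j w x)"
      by (rule ennreal_mult) (auto intro!: sum_nonneg mult_nonneg_nonneg walk_prob_nonneg)
    also have "\<dots> = ennreal (1 / real d) * (\<Sum>x\<in>{x. E v x}. ennreal (walk_prob E d i u w * walk_prob E d j w x))"
      by (subst sum_ennreal) (auto intro!: mult_nonneg_nonneg walk_prob_nonneg)
    finally show "ennreal (walk_prob E d i u w * walk_prob E d (Suc j) w v) = \<dots>" .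
  qed
  also have "\<dots> = ennreal (1 / real d) * (\<Sum>x\<in>{x. E v x}. \<integral>\<^sup>+w. ennreal (walk_prob E d i u w * walk_prob E d j w x) \<partial>count_space UNIV)"
    by (simp add: nn_integral_cmult nn_integral_sum)
  also have "\<dots> = ennreal (1 / real d) * (\<Sum>x\<in>{x. E v x}. ennreal (walk_prob E d (i+j) u x))"
    using Suc by simp
  also have "\<dots> = ennreal (1 / real d) * ennreal (\<Sum>x\<in>{x. E v x}. walk_prob E d (i+j) u x)"
    by (subst sum_ennreal) (auto intro!: walk_prob_nonneg)
  also have "\<dots> = ennreal (1 / real d * (\<Sum>x\<in>{x. E v x}. walk_prob E d (i+j) u x))"
    by (rule ennreal_mult[symmetric]) (auto intro!: walk_prob_nonneg sum_nonneg)
  also have "\<dots> = ennreal (walk_prob E d (i + Suc j) u v)"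
    by simp
  finally show ?case .
qed

lemma walk_prob_one:
  assumes "d_regular_graph E d"
  shows "walk_prob E d 1 u v = (if E v u then 1 / real d else 0)"
proof -
  have fin: "finite {w. E v w}" using assms unfolding d_regular_graph_def by blast
  have "(\<Sum>w\<in>{w. E v w}. (if u = w then 1 else 0::real)) = (if E v u then 1 else 0)"
    using fin by (simp add: sum.delta)
  then show ?thesis by simp
qed

lemma walk_prob_sym:
  assumes "d_regular_graph E d"
  shows "walk_prob E d k u v = walk_prob E d k v u"
proof (induction k arbitrary: u v)
  case 0 then show ?case by simp
next
  case (Suc k)
  have symE: "\<And>x y. E x y \<longleftrightarrow> E y x" using assms unfolding d_regular_graph_def by blast
  have "ennreal (walk_prob E d (k+1) u v) = (\<integral>\<^sup>+w. ennreal (walk_prob E d k u w * walk_prob E d 1 w v) \<partial>count_space UNIV)"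
    by (rule chapman[OF assms, symmetric])
  also have "\<dots> = (\<integral>\<^sup>+w. ennreal (walk_prob E d 1 v w * walk_prob E d k w u) \<partial>count_space UNIV)"
  proof (intro nn_integral_cong)
    fix w
    have p1: "walk_prob E d 1 w v = walk_prob E d 1 v w"
      unfolding walk_prob_one[OF assms] using symE by auto
    show "ennreal (walk_prob E d k u w * walk_prob E d 1 w v) = ennreal (walk_prob E d 1 v w * walk_prob E d k w u)"
      using p1 Suc[of u w] by (simp only: mult.commute)
  qed
  also have "\<dots> = ennreal (walk_prob E d (1+k) v u)"
    by (rule chapman[OF assms])
  finally show ?case
    by (simp add: walk_prob_nonneg del: walk_prob.simps)
qed

lemma walk_prob_aut:
  assumes "graph_aut E \<phi>"
  shows "walk_prob E d k (\<phi> u) (\<phi> v) = walk_prob E d k u v"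
proof (induction k arbitrary: v)
  case 0
  have "inj \<phi>" using assms by (simp add: graph_aut_def bij_def)
  then show ?case by (simp add: inj_eq)
next
  case (Suc k)
  have b: "bij \<phi>" and e: "\<And>x y. E x y \<longleftrightarrow> E (\<phi> x) (\<phi> y)" using assms by (auto simp: graph_aut_def)
  have img: "{w. E (\<phi> v) w} = \<phi> ` {x. E v x}"
  proof -
    { fix w assume "E (\<phi> v) w"
      obtain x where "w = \<phi> x" using b by (metis bij_pointE)
      with \<open>E (\<phi> v) w\<close> e have "w \<in> \<phi> ` {x. E v x}" by auto }
    then show ?thesis using e by auto
  qed
  have "(\<Sum>w\<in>{w. E (\<phi> v) w}. walk_prob E d k (\<phi> u) w) = (\<Sum>x\<in>{x. E v x}. walk_prob E d k (\<phi> u) (\<phi> x))"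
  proof -
    have "inj_on \<phi> {x. E v x}" by (meson b bij_def inj_on_subset subset_UNIV)
    then show ?thesis unfolding img by (simp add: sum.reindex comp_def)
  qed
  then show ?case using Suc by simp
qed


definition cc :: "nat \<Rightarrow> real" where "cc k = pochhammer (1/2) k / fact k"

lemma cc_nonneg: "0 \<le> cc k"
  unfolding cc_def by (intro divide_nonneg_nonneg pochhammer_nonneg) auto

lemma cc_gchoose: "cc k = (-1)^k * ((-1/2::real) gchoose k)"
  unfolding cc_def gbinomial_pochhammer by simp

lemma cc_conv: "(\<Sum>i\<in>{0..k}. cc i * cc (k - i)) = 1"
proof -
  have "(\<Sum>i\<in>{0..k}. cc i * cc (k - i)) = (\<Sum>i\<in>{0..k}. (-1)^k * (((-1/2::real) gchoose i) * ((-1/2) gchoose (k - i))))"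
  proof (intro sum.cong refl)
    fix i assume "i \<in> {0..k}"
    then have "(-1::real)^i * (-1)^(k-i) = (-1)^k" by (simp add: power_add[symmetric])
    then show "cc i * cc (k - i) = (-1)^k * (((-1/2::real) gchoose i) * ((-1/2) gchoose (k - i)))"
      unfolding cc_gchoose by (metis (no_types, lifting) mult.assoc mult.left_commute)
  qed
  also have "\<dots> = (-1)^k * ((-1/2 + -1/2::real) gchoose k)"
    by (simp add: sum_distrib_left[symmetric] gbinomial_Vandermonde)
  also have "\<dots> = 1"
    by (simp add: gbinomial_pochhammer pochhammer_fact[symmetric] power_mult_distrib[symmetric])
  finally show ?thesis .
qed

lemma cauchy_ennreal:
  fixes a :: "nat \<Rightarrow> ennreal" and h :: "nat \<Rightarrow> ennreal"
  shows "(\<Sum>i. \<Sum>j. a i * a j * h (i + j)) = (\<Sum>k. (\<Sum>i\<in>{0..k}. a i * a (k - i)) * h k)"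
proof -
  define G where "G i k = (if i \<le> k then a i * a (k - i) * h k else 0)" for i k
  have 1: "(\<Sum>j. a i * a j * h (i + j)) = (\<Sum>k. G i k)" for i
  proof -
    have bij: "bij_betw (\<lambda>j. j + i) UNIV {i..}"
      by (rule bij_betwI[where g="\<lambda>k. k - i"]) auto
    have "(\<Sum>k. G i k) = (\<integral>\<^sup>+k. G i k \<partial>count_space UNIV)"
      by (simp add: nn_integral_count_space_nat)
    also have "\<dots> = (\<integral>\<^sup>+k. G i k \<partial>count_space {i..})"
      by (rule nn_integral_count_space_eq) (auto simp: G_def)
    also have "\<dots> = (\<integral>\<^sup>+j. G i (j + i) \<partial>count_space UNIV)"
      by (rule nn_integral_bij_count_space[OF bij, symmetric])
    also have "\<dots> = (\<Sum>j. G i (j + i))"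
      by (simp add: nn_integral_count_space_nat)
    finally show ?thesis by (simp add: G_def add.commute)
  qed
  have 2: "(\<Sum>i. \<Sum>k. G i k) = (\<Sum>k. \<Sum>i. G i k)"
  proof -
    have "(\<Sum>i. \<Sum>k. G i k) = (\<integral>\<^sup>+i. \<integral>\<^sup>+k. G i k \<partial>count_space UNIV \<partial>count_space UNIV)"
      by (simp add: nn_integral_count_space_nat)
    also have "\<dots> = (\<integral>\<^sup>+k. \<integral>\<^sup>+i. G i k \<partial>count_space UNIV \<partial>count_space UNIV)"
      by (rule nn_integral_count_space_nn_integral[symmetric]) auto
    also have "\<dots> = (\<Sum>k. \<Sum>i. G i k)"
      by (simp add: nn_integral_count_space_nat)
    finally show ?thesis .
  qed
  have 3: "(\<Sum>i. G i k) = (\<Sum>i\<in>{0..k}. a i * a (k - i)) * h k" for k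
  proof -
    have "(\<Sum>i. G i k) = (\<Sum>i\<in>{0..k}. G i k)"
      by (rule suminf_finite) (auto simp: G_def)
    then show ?thesis by (simp add: G_def sum_distrib_right)
  qed
  show ?thesis using 1 2 3 by simp
qed


definition bb :: "('v \<Rightarrow> 'v \<Rightarrow> bool) \<Rightarrow> nat \<Rightarrow> 'v \<Rightarrow> 'v \<Rightarrow> ennreal" where
  "bb E d u w = (\<Sum>k. ennreal (cc k * walk_prob E d k u w))"

lemma bb_aut: "graph_aut E \<phi> \<Longrightarrow> bb E d (\<phi> u) (\<phi> w) = bb E d u w"
  unfolding bb_def by (simp add: walk_prob_aut)

lemma bb_inner:
  assumes "d_regular_graph E d"
  shows "(\<integral>\<^sup>+w. bb E d u w * bb E d v w \<partial>count_space UNIV) = (\<Sum>k. ennreal (walk_prob E d k u v))"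
proof -
  let ?p = "walk_prob E d"
  have prod: "suminf x * suminf y = (\<Sum>i. \<Sum>j. x i * y j)" for x y :: "nat \<Rightarrow> ennreal"
  proof -
    have "(\<Sum>i. \<Sum>j. x i * y j) = (\<Sum>i. x i * suminf y)" by (simp only: ennreal_suminf_cmult)
    also have "\<dots> = (\<Sum>i. suminf y * x i)" by (simp only: mult.commute)
    also have "\<dots> = suminf y * suminf x" by (rule ennreal_suminf_cmult)
    finally show ?thesis by (simp add: mult.commute)
  qed
  have "(\<integral>\<^sup>+w. bb E d u w * bb E d v w \<partial>count_space UNIV)
      = (\<integral>\<^sup>+w. (\<Sum>i. \<Sum>j. ennreal (cc i * ?p i u w) * ennreal (cc j * ?p j v w)) \<partial>count_space UNIV)"
    unfolding bb_def prod ..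
  also have "\<dots> = (\<Sum>i. \<Sum>j. \<integral>\<^sup>+w. ennreal (cc i * ?p i u w) * ennreal (cc j * ?p j v w) \<partial>count_space UNIV)"
  proof -
    have 1: "(\<integral>\<^sup>+w. (\<Sum>i. \<Sum>j. ennreal (cc i * ?p i u w) * ennreal (cc j * ?p j v w)) \<partial>count_space UNIV)
      = (\<Sum>i. \<integral>\<^sup>+w. (\<Sum>j. ennreal (cc i * ?p i u w) * ennreal (cc j * ?p j v w)) \<partial>count_space UNIV)"
      by (rule nn_integral_suminf) simp
    have 2: "(\<integral>\<^sup>+w. (\<Sum>j. ennreal (cc i * ?p i u w) * ennreal (cc j * ?p j v w)) \<partial>count_space UNIV)
      = (\<Sum>j. \<integral>\<^sup>+w. ennreal (cc i * ?p i u w) * ennreal (cc j * ?p j v w) \<partial>count_space UNIV)" for i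
      by (rule nn_integral_suminf) simp
    show ?thesis unfolding 1 2 ..
  qed
  also have "\<dots> = (\<Sum>i. \<Sum>j. ennreal (cc i) * ennreal (cc j) * ennreal (?p (i + j) u v))"
  proof (intro suminf_cong)
    fix i j
    have "(\<integral>\<^sup>+w. ennreal (cc i * ?p i u w) * ennreal (cc j * ?p j v w) \<partial>count_space UNIV)
       = (\<integral>\<^sup>+w. (ennreal (cc i) * ennreal (cc j)) * ennreal (?p i u w * ?p j w v) \<partial>count_space UNIV)"
      by (intro nn_integral_cong)
         (simp add: ennreal_mult cc_nonneg walk_prob_nonneg walk_prob_sym[OF assms, of j v] mult_ac)
    also have "\<dots> = ennreal (cc i) * ennreal (cc j) * ennreal (?p (i + j) u v)"
      by (simp add: nn_integral_cmult chapman[OF assms])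
    finally show "(\<integral>\<^sup>+w. ennreal (cc i * ?p i u w) * ennreal (cc j * ?p j v w) \<partial>count_space UNIV) = \<dots>" .
  qed
  also have "\<dots> = (\<Sum>k. (\<Sum>i\<in>{0..k}. ennreal (cc i) * ennreal (cc (k - i))) * ennreal (?p k u v))"
    by (rule cauchy_ennreal)
  also have "\<dots> = (\<Sum>k. ennreal (?p k u v))"
  proof (intro suminf_cong)
    fix k
    have "(\<Sum>i\<in>{0..k}. ennreal (cc i) * ennreal (cc (k - i))) = ennreal (\<Sum>i\<in>{0..k}. cc i * cc (k - i))"
      by (simp add: ennreal_mult[symmetric] cc_nonneg sum_ennreal mult_nonneg_nonneg)
    then show "(\<Sum>i\<in>{0..k}. ennreal (cc i) * ennreal (cc (k - i))) * ennreal (?p k u v) = ennreal (?p k u v)"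
      by (simp add: cc_conv)
  qed
  finally show ?thesis .
qed

lemma ennreal_mult_le_sq: "(x::ennreal) * y \<le> x * x + y * y"
proof (cases "x = top \<or> y = top")
  case True then show ?thesis
    by (cases "x = 0"; cases "y = 0") (auto simp: ennreal_mult_top ennreal_top_mult)
next
  case False
  then obtain a b where ab: "x = ennreal a" "y = ennreal b" "0 \<le> a" "0 \<le> b"
    by (metis ennreal_cases)
  have "a * b \<le> a * a + b * b" using ab
    by (smt (verit, best) mult_nonneg_nonneg sum_squares_ge_zero mult_left_mono mult_right_mono)
  then have "ennreal (a * b) \<le> ennreal (a * a + b * b)" by (rule ennreal_leI)
  then show ?thesis using ab
    by (simp add: ennreal_mult[symmetric] ennreal_plus[symmetric] del: ennreal_plus)
qed

lemma gq_finite: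
  assumes "d_regular_graph E d" "transient E d"
  shows "(\<Sum>k. ennreal (walk_prob E d k u v)) < \<infinity>"
proof -
  have diag: "(\<Sum>k. ennreal (walk_prob E d k x x)) < \<infinity>" for x
    using assms(2) unfolding transient_def
    by (simp add: suminf_ennreal2 walk_prob_nonneg)
  have "(\<Sum>k. ennreal (walk_prob E d k u v)) = (\<integral>\<^sup>+w. bb E d u w * bb E d v w \<partial>count_space UNIV)"
    by (rule bb_inner[OF assms(1), symmetric])
  also have "\<dots> \<le> (\<integral>\<^sup>+w. bb E d u w * bb E d u w + bb E d v w * bb E d v w \<partial>count_space UNIV)"
    by (intro nn_integral_mono ennreal_mult_le_sq)
  also have "\<dots> = (\<integral>\<^sup>+w. bb E d u w * bb E d u w \<partial>count_space UNIV) + (\<integral>\<^sup>+w. bb E d v w * bb E d v w \<partial>count_space UNIV)"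
    by (rule nn_integral_add) auto
  also have "\<dots> < \<infinity>"
    using diag[of u] diag[of v] by (simp add: bb_inner[OF assms(1)])
  finally show ?thesis .
qed

lemma bb_finite:
  assumes "d_regular_graph E d" "transient E d"
  shows "bb E d u w < \<infinity>"
proof -
  have "bb E d u w * bb E d u w \<le> (\<integral>\<^sup>+w. bb E d u w * bb E d u w \<partial>count_space UNIV)"
    by (rule nn_integral_ge_point) simp
  also have "\<dots> < \<infinity>" using gq_finite[OF assms] by (simp add: bb_inner[OF assms(1)])
  finally show ?thesis
    by (auto simp: ennreal_mult_less_top)
qed

definition BB :: "('v \<Rightarrow> 'v \<Rightarrow> bool) \<Rightarrow> nat \<Rightarrow> 'v \<Rightarrow> 'v \<Rightarrow> real" where
  "BB E d u w = enn2real (bb E d u w)"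

lemma BB_nonneg: "0 \<le> BB E d u w" by (simp add: BB_def)

lemma BB_aut: "graph_aut E \<phi> \<Longrightarrow> BB E d (\<phi> u) (\<phi> w) = BB E d u w"
  by (simp add: BB_def bb_aut)

lemma green_summable:
  assumes "d_regular_graph E d" "transient E d"
  shows "summable (\<lambda>k. walk_prob E d k u v)"
  using gq_finite[OF assms, of u v] by (intro summable_suminf_not_top) (auto simp: walk_prob_nonneg)

lemma BB_inner:
  assumes "d_regular_graph E d" "transient E d"
  shows "(\<integral>\<^sup>+w. ennreal (BB E d u w * BB E d v w) \<partial>count_space UNIV) = ennreal (green E d u v)"
proof -
  have "(\<integral>\<^sup>+w. ennreal (BB E d u w * BB E d v w) \<partial>count_space UNIV) = (\<integral>\<^sup>+w. bb E d u w * bb E d v w \<partial>count_space UNIV)"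
    using bb_finite[OF assms]
  proof (intro nn_integral_cong)
    fix w
    have "ennreal (BB E d u w * BB E d v w) = ennreal (BB E d u w) * ennreal (BB E d v w)"
      by (rule ennreal_mult) (auto simp: BB_nonneg)
    then show "ennreal (BB E d u w * BB E d v w) = bb E d u w * bb E d v w"
      using bb_finite[OF assms, of u w] bb_finite[OF assms, of v w] by (simp add: BB_def)
  qed
  also have "\<dots> = ennreal (green E d u v)"
    unfolding bb_inner[OF assms(1)] green_def
    by (rule suminf_ennreal2) (auto simp: walk_prob_nonneg green_summable[OF assms])
  finally show ?thesis .
qed

lemma green_nonneg:
  assumes "d_regular_graph E d" "transient E d"
  shows "0 \<le> green E d u v"
  unfolding green_def by (intro suminf_nonneg green_summable[OF assms] walk_prob_nonneg)

lemma nn_count_has_sum: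
  fixes f :: "'a \<Rightarrow> real"
  assumes "\<And>x. 0 \<le> f x" "(\<integral>\<^sup>+x. ennreal (f x) \<partial>count_space UNIV) = ennreal s" "0 \<le> s"
  shows "(f has_sum s) UNIV"
proof -
  have int: "integrable (count_space UNIV) f"
    using assms by (intro integrableI_bounded) auto
  then have a1: "Infinite_Set_Sum.abs_summable_on f UNIV"
    by (simp add: Infinite_Set_Sum.abs_summable_on_def)
  then have "(\<lambda>x. norm (f x)) summable_on UNIV"
    using abs_summable_equivalent by blast
  then have sm: "f summable_on UNIV" by (rule abs_summable_summable)
  have "infsetsum f UNIV = s"
    using assms by (subst infsetsum_conv_nn_integral) auto
  then have "infsum f UNIV = s" using infsetsum_infsum[OF a1] by simp
  then show ?thesis using sm by (metis has_sum_infsum)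
qed

lemma BB_has_sum:
  assumes "d_regular_graph E d" "transient E d"
  shows "((\<lambda>w. BB E d u w * BB E d v w) has_sum green E d u v) UNIV"
  by (rule nn_count_has_sum) (auto simp: BB_nonneg BB_inner[OF assms] green_nonneg[OF assms])


definition orthonormal :: "'w measure \<Rightarrow> ('v \<Rightarrow> 'w \<Rightarrow> real) \<Rightarrow> bool" where
  "orthonormal M W \<longleftrightarrow> (\<forall>u. W u \<in> borel_measurable M) \<and>
     (\<forall>u w. integrable M (\<lambda>x. W u x * W w x) \<and> (\<integral>x. W u x * W w x \<partial>M) = (if u = w then 1 else 0))"

lemma iid_meas: "iid_std_normal M Z \<Longrightarrow> Z u \<in> borel_measurable M"
  unfolding iid_std_normal_def using distributed_measurable[of M lborel "Z u"] by auto

lemma iid_single: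
  assumes "iid_std_normal M Z"
  shows "integrable M (Z u)" "(\<integral>x. Z u x \<partial>M) = 0"
    "integrable M (\<lambda>x. Z u x * Z u x)" "(\<integral>x. Z u x * Z u x \<partial>M) = 1"
proof -
  have D: "distributed M lborel (Z u) std_normal_density" and P: "prob_space M"
    using assms by (auto simp: iid_std_normal_def)
  show "integrable M (Z u)"
    using distributed_integrable_var[OF D] integrable_std_normal_moment[of 1] by simp
  show "(\<integral>x. Z u x \<partial>M) = 0"
    using prob_space.standard_normal_distributed_expectation[OF P D] .
  have "integrable lborel (\<lambda>x. std_normal_density x * (x * x))"
    using integrable_std_normal_moment[of 2] by (simp add: power2_eq_square)
  then show "integrable M (\<lambda>x. Z u x * Z u x)"
    using distributed_integrable[OF D, of "\<lambda>x. x * x"] by simp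
  have "(\<integral>x. std_normal_density x * (x * x) \<partial>lborel) = 1"
    using integral_std_normal_moment_even[of 1] by (simp add: power2_eq_square)
  then show "(\<integral>x. Z u x * Z u x \<partial>M) = 1"
    using distributed_integral[OF D, of "\<lambda>x. x * x"] by simp
qed

lemma iid_orthonormal:
  assumes "iid_std_normal M Z" "inj f"
  shows "orthonormal M (\<lambda>u. Z (f u))"
proof -
  have "integrable M (\<lambda>x. Z (f u) x * Z (f w) x) \<and> (\<integral>x. Z (f u) x * Z (f w) x \<partial>M) = (if u = w then 1 else 0)" for u w
  proof -
  have P: "prob_space M" and I: "prob_space.indep_vars M (\<lambda>_. borel) Z UNIV"
    using assms(1) by (auto simp: iid_std_normal_def)
  show ?thesis
  proof (cases "u = w")
    case True then show ?thesis using iid_single[OF assms(1)] by simp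
  next
    case False
    then have ne: "f u \<noteq> f w" using assms(2) by (auto simp: inj_eq)
    have I2: "prob_space.indep_vars M (\<lambda>_. borel) Z {f u, f w}"
      using prob_space.indep_vars_subset[OF P I] by auto
    have prod: "(\<lambda>x. \<Prod>i\<in>{f u, f w}. Z i x) = (\<lambda>x. Z (f u) x * Z (f w) x)"
      using ne by auto
    have "integrable M (\<lambda>x. \<Prod>i\<in>{f u, f w}. Z i x)"
      by (rule prob_space.indep_vars_integrable[OF P _ I2]) (auto intro: iid_single[OF assms(1)])
    moreover have "(\<integral>x. (\<Prod>i\<in>{f u, f w}. Z i x) \<partial>M) = (\<Prod>i\<in>{f u, f w}. \<integral>x. Z i x \<partial>M)"
      by (rule prob_space.indep_vars_lebesgue_integral[OF P _ I2]) (auto intro: iid_single[OF assms(1)])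
    ultimately show ?thesis using False ne iid_single(2)[OF assms(1)] by (simp add: prod)
  qed
  qed
  then show ?thesis unfolding orthonormal_def using iid_meas[OF assms(1)] by blast
qed

lemma orthonormal_sum_sq:
  assumes "orthonormal M W" "finite H"
  shows "integrable M (\<lambda>x. (\<Sum>w\<in>H. c w * W w x)\<^sup>2)"
    "(\<integral>x. (\<Sum>w\<in>H. c w * W w x)\<^sup>2 \<partial>M) = (\<Sum>w\<in>H. (c w)\<^sup>2)"
    "(\<integral>\<^sup>+x. ennreal ((\<Sum>w\<in>H. c w * W w x)\<^sup>2) \<partial>M) = ennreal (\<Sum>w\<in>H. (c w)\<^sup>2)"
proof -
  have eq: "(\<Sum>w\<in>H. c w * W w x)\<^sup>2 = (\<Sum>u\<in>H. \<Sum>w\<in>H. c u * c w * (W u x * W w x))" for x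
    by (simp add: power2_eq_square sum_product mult_ac)
  have int: "integrable M (\<lambda>x. W u x * W w x)" for u w
    using assms(1) by (simp add: orthonormal_def)
  show I: "integrable M (\<lambda>x. (\<Sum>w\<in>H. c w * W w x)\<^sup>2)"
    unfolding eq by (auto intro!: integrable_sum integrable_mult_right int)
  have "(\<integral>x. (\<Sum>w\<in>H. c w * W w x)\<^sup>2 \<partial>M) = (\<Sum>u\<in>H. \<Sum>w\<in>H. c u * c w * (\<integral>x. W u x * W w x \<partial>M))"
    unfolding eq by (simp add: int integrable_sum)
  also have "\<dots> = (\<Sum>u\<in>H. \<Sum>w\<in>H. c u * c w * (if u = w then 1 else 0))"
    using assms(1) by (simp add: orthonormal_def)
  also have "\<dots> = (\<Sum>w\<in>H. (c w)\<^sup>2)"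
    using assms(2) by (simp add: power2_eq_square if_distrib[of "\<lambda>x. _ * x"] sum.delta cong: if_cong)
  finally show V: "(\<integral>x. (\<Sum>w\<in>H. c w * W w x)\<^sup>2 \<partial>M) = (\<Sum>w\<in>H. (c w)\<^sup>2)" .
  show "(\<integral>\<^sup>+x. ennreal ((\<Sum>w\<in>H. c w * W w x)\<^sup>2) \<partial>M) = ennreal (\<Sum>w\<in>H. (c w)\<^sup>2)"
    using nn_integral_eq_integral[OF I] V by simp
qed

lemma L1_from_L2:
  assumes "prob_space M" "D \<in> borel_measurable M" "(\<integral>\<^sup>+x. ennreal ((D x)\<^sup>2) \<partial>M) \<le> ennreal (e\<^sup>2)" "0 < e"
  shows "(\<integral>\<^sup>+x. ennreal \<bar>D x\<bar> \<partial>M) \<le> ennreal e"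
proof -
  have pt: "ennreal \<bar>y\<bar> \<le> ennreal (y\<^sup>2) * ennreal (1 / (2 * e)) + ennreal (e / 2)" for y
  proof -
    have "\<bar>y\<bar> \<le> y\<^sup>2 * (1 / (2 * e)) + e / 2"
    proof -
      have "0 \<le> (\<bar>y\<bar> - e)\<^sup>2" by simp
      then have "2 * e * \<bar>y\<bar> \<le> y\<^sup>2 + e\<^sup>2" by (simp add: power2_eq_square algebra_simps)
      then show ?thesis using \<open>0 < e\<close> by (simp add: field_simps power2_eq_square)
    qed
    then have "ennreal \<bar>y\<bar> \<le> ennreal (y\<^sup>2 * (1 / (2 * e)) + e / 2)" by (rule ennreal_leI)
    also have "\<dots> = ennreal (y\<^sup>2 * (1 / (2 * e))) + ennreal (e / 2)"
      by (rule ennreal_plus) (use \<open>0 < e\<close> in auto)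
    also have "ennreal (y\<^sup>2 * (1 / (2 * e))) = ennreal (y\<^sup>2) * ennreal (1 / (2 * e))"
      by (rule ennreal_mult) (use \<open>0 < e\<close> in auto)
    finally show ?thesis .
  qed
  have "(\<integral>\<^sup>+x. ennreal \<bar>D x\<bar> \<partial>M) \<le> (\<integral>\<^sup>+x. ennreal ((D x)\<^sup>2) * ennreal (1 / (2 * e)) + ennreal (e / 2) \<partial>M)"
    by (intro nn_integral_mono pt)
  also have "\<dots> = (\<integral>\<^sup>+x. ennreal ((D x)\<^sup>2) \<partial>M) * ennreal (1 / (2 * e)) + ennreal (e / 2)"
    using assms(1,2) by (simp add: nn_integral_add nn_integral_multc prob_space.emeasure_space_1)
  also have "\<dots> \<le> ennreal (e\<^sup>2) * ennreal (1 / (2 * e)) + ennreal (e / 2)"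
    by (intro add_mono mult_right_mono assms(3)) auto
  also have "\<dots> = ennreal e"
    using \<open>0 < e\<close> by (simp add: ennreal_mult[symmetric] ennreal_plus[symmetric] power2_eq_square field_simps del: ennreal_plus)
  finally show ?thesis .
qed

lemma abs_aux: "\<bar>a + b - S\<bar> * 2 < e \<Longrightarrow> \<bar>a - S\<bar> * 2 < e \<Longrightarrow> \<bar>b\<bar> < (e::real)"
  by (smt (verit))

lemma has_sum_tail:
  fixes f :: "'a \<Rightarrow> real"
  assumes "(f has_sum S) UNIV" "0 < e"
  shows "\<exists>H0. finite H0 \<and> (\<forall>F. finite F \<and> F \<inter> H0 = {} \<longrightarrow> \<bar>sum f F\<bar> < e)"
proof -
  have "eventually (\<lambda>F. dist (sum f F) S < e / 2) (finite_subsets_at_top UNIV)"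
  proof -
    have t: "(sum f \<longlongrightarrow> S) (finite_subsets_at_top UNIV)" using assms(1) unfolding has_sum_def .
    show ?thesis using tendstoD[OF t, of "e/2"] assms(2) by simp
  qed
  then obtain H0 where H0: "finite H0" "\<And>Y. finite Y \<Longrightarrow> H0 \<subseteq> Y \<Longrightarrow> dist (sum f Y) S < e / 2"
    unfolding eventually_finite_subsets_at_top by auto
  show ?thesis
  proof (intro exI conjI allI impI)
    fix F assume F: "finite F \<and> F \<inter> H0 = {}"
    have "sum f (H0 \<union> F) = sum f H0 + sum f F" using F H0(1) by (simp add: sum.union_disjoint Int_commute)
    moreover have "dist (sum f (H0 \<union> F)) S < e / 2" using F H0 by auto
    moreover have "dist (sum f H0) S < e / 2" using H0 by auto
    ultimately show "\<bar>sum f F\<bar> < e" by (simp add: dist_real_def abs_aux)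
  qed (rule H0(1))
qed


lemma sum_diff_as_sum:
  fixes c :: "'v \<Rightarrow> real"
  assumes "finite A" "finite B"
  shows "(\<Sum>w\<in>A. c w * W w x) - (\<Sum>w\<in>B. c w * W w x)
       = (\<Sum>w\<in>A \<union> B. ((if w \<in> A then c w else 0) - (if w \<in> B then c w else 0)) * W w x)"
proof -
  have a: "(\<Sum>w\<in>A \<union> B. (if w \<in> A then c w else 0) * W w x) = (\<Sum>w\<in>A. c w * W w x)"
    using assms by (intro sum.mono_neutral_cong_right) auto
  have b: "(\<Sum>w\<in>A \<union> B. (if w \<in> B then c w else 0) * W w x) = (\<Sum>w\<in>B. c w * W w x)"
    using assms by (intro sum.mono_neutral_cong_right) auto
  show ?thesis using a b by (simp add: left_diff_distrib sum_subtractf)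
qed

lemma L2_diff_bound:
  fixes c :: "'v \<Rightarrow> real"
  assumes O: "orthonormal M W" and fin: "finite A" "finite B" "finite K" and sub: "K \<subseteq> A" "K \<subseteq> B"
    and tail: "\<And>F. finite F \<Longrightarrow> F \<inter> K = {} \<Longrightarrow> (\<Sum>w\<in>F. (c w)\<^sup>2) < t"
  shows "(\<integral>\<^sup>+x. ennreal (((\<Sum>w\<in>A. c w * W w x) - (\<Sum>w\<in>B. c w * W w x))\<^sup>2) \<partial>M) \<le> ennreal t"
proof -
  define e where "e w = (if w \<in> A then c w else 0) - (if w \<in> B then c w else 0)" for w
  have "(\<integral>\<^sup>+x. ennreal (((\<Sum>w\<in>A. c w * W w x) - (\<Sum>w\<in>B. c w * W w x))\<^sup>2) \<partial>M)
      = (\<integral>\<^sup>+x. ennreal ((\<Sum>w\<in>A \<union> B. e w * W w x)\<^sup>2) \<partial>M)"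
    unfolding e_def using fin by (simp add: sum_diff_as_sum)
  also have "\<dots> = ennreal (\<Sum>w\<in>A \<union> B. (e w)\<^sup>2)"
    using fin by (intro orthonormal_sum_sq(3)[OF O]) auto
  also have "\<dots> \<le> ennreal t"
  proof (rule ennreal_leI)
    have "(\<Sum>w\<in>A \<union> B. (e w)\<^sup>2) = (\<Sum>w\<in>(A \<union> B) - K. (e w)\<^sup>2)"
      using fin sub by (intro sum.mono_neutral_right) (auto simp: e_def)
    also have "\<dots> \<le> (\<Sum>w\<in>(A \<union> B) - K. (c w)\<^sup>2)"
      by (intro sum_mono) (auto simp: e_def)
    also have "\<dots> < t"
      using fin by (intro tail) auto
    finally show "(\<Sum>w\<in>A \<union> B. (e w)\<^sup>2) \<le> t" by simp
  qed
  finally show ?thesis .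
qed

lemma L2_exists:
  fixes c :: "'v \<Rightarrow> real"
  assumes P: "prob_space M" and O: "orthonormal M W" and S: "((\<lambda>u. (c u)\<^sup>2) has_sum Sc) UNIV"
  shows "\<exists>Y. L2_series M c W Y"
proof -
  define q :: "nat \<Rightarrow> real" where "q n = (1/2)^n" for n
  have qpos: "0 < q n" for n by (simp add: q_def)
  have "\<forall>n. \<exists>H. finite H \<and> (\<forall>F. finite F \<and> F \<inter> H = {} \<longrightarrow> \<bar>\<Sum>w\<in>F. (c w)\<^sup>2\<bar> < q n * q n)"
    using has_sum_tail[OF S] qpos by simp
  from choice[OF this] obtain Hs where Hs0: "\<forall>n. finite (Hs n) \<and> (\<forall>F. finite F \<and> F \<inter> Hs n = {} \<longrightarrow> \<bar>\<Sum>w\<in>F. (c w)\<^sup>2\<bar> < q n * q n)"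
    by blast
  have Hs: "\<And>n. finite (Hs n)" "\<And>n F. finite F \<Longrightarrow> F \<inter> Hs n = {} \<Longrightarrow> \<bar>\<Sum>w\<in>F. (c w)\<^sup>2\<bar> < q n * q n"
    using Hs0 by blast+
  define K where "K n = (\<Union>m\<le>n. Hs m)" for n
  have Kfin: "finite (K n)" for n using Hs(1) by (simp add: K_def)
  have Kmono: "n \<le> m \<Longrightarrow> K n \<subseteq> K m" for n m unfolding K_def by (intro UN_mono) auto
  have Ktail: "finite F \<Longrightarrow> F \<inter> K n = {} \<Longrightarrow> (\<Sum>w\<in>F. (c w)\<^sup>2) < q n * q n" for F n
  proof -
    assume a: "finite F" "F \<inter> K n = {}"
    then have "F \<inter> Hs n = {}" by (auto simp: K_def)
    then have "\<bar>\<Sum>w\<in>F. (c w)\<^sup>2\<bar> < q n * q n" using Hs(2)[of F n] a by simp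
    then show ?thesis by linarith
  qed
  have Wm[measurable]: "W u \<in> borel_measurable M" for u using O by (simp add: orthonormal_def)
  define Sn where "Sn n x = (\<Sum>w\<in>K n. c w * W w x)" for n x
  have Snm[measurable]: "Sn n \<in> borel_measurable M" for n unfolding Sn_def by measurable
  have diffb: "(\<integral>\<^sup>+x. ennreal ((Sn m x - (\<Sum>w\<in>F. c w * W w x))\<^sup>2) \<partial>M) \<le> ennreal (q N * q N)"
    if "finite F" "K N \<subseteq> F" "N \<le> m" for m N F
    unfolding Sn_def
    by (rule L2_diff_bound[OF O Kfin that(1) Kfin Kmono[OF that(3)] that(2)]) (rule Ktail)
  have d1: "(\<integral>\<^sup>+x. ennreal \<bar>Sn (Suc n) x - Sn n x\<bar> \<partial>M) \<le> ennreal (q n)" for n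
  proof (rule L1_from_L2[OF P _ _ qpos])
    show "(\<integral>\<^sup>+x. ennreal ((Sn (Suc n) x - Sn n x)\<^sup>2) \<partial>M) \<le> ennreal ((q n)\<^sup>2)"
    proof -
      have "(\<integral>\<^sup>+x. ennreal ((Sn (Suc n) x - (\<Sum>w\<in>K n. c w * W w x))\<^sup>2) \<partial>M) \<le> ennreal (q n * q n)"
        by (rule diffb[OF Kfin order.refl]) simp
      then show ?thesis by (simp only: Sn_def[of n] power2_eq_square)
    qed
  qed simp
  have "(\<integral>\<^sup>+x. (\<Sum>n. ennreal \<bar>Sn (Suc n) x - Sn n x\<bar>) \<partial>M) = (\<Sum>n. \<integral>\<^sup>+x. ennreal \<bar>Sn (Suc n) x - Sn n x\<bar> \<partial>M)"
    by (rule nn_integral_suminf) simp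
  also have "\<dots> \<le> (\<Sum>n. ennreal (q n))"
    by (intro suminf_le d1) auto
  also have "\<dots> = ennreal 2"
  proof -
    have "summable q" unfolding q_def by (rule summable_geometric) simp
    moreover have "suminf q = 2" unfolding q_def by (subst suminf_geometric) auto
    ultimately show ?thesis by (subst suminf_ennreal2) (auto simp: q_def)
  qed
  finally have fin: "(\<integral>\<^sup>+x. (\<Sum>n. ennreal \<bar>Sn (Suc n) x - Sn n x\<bar>) \<partial>M) \<noteq> \<infinity>"
    by (auto simp: top_unique)
  have AEc: "AE x in M. (\<Sum>n. ennreal \<bar>Sn (Suc n) x - Sn n x\<bar>) \<noteq> \<infinity>"
    by (rule nn_integral_PInf_AE[OF _ fin]) simp
  define Y where "Y x = lim (\<lambda>n. Sn n x)" for x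
  have Ym[measurable]: "Y \<in> borel_measurable M" unfolding Y_def by measurable
  have AEconv: "AE x in M. (\<lambda>n. Sn n x) \<longlonglongrightarrow> Y x"
    using AEc
  proof (rule AE_mp, intro AE_I2 impI)
    fix x assume "(\<Sum>n. ennreal \<bar>Sn (Suc n) x - Sn n x\<bar>) \<noteq> \<infinity>"
    then have "summable (\<lambda>n. \<bar>Sn (Suc n) x - Sn n x\<bar>)"
      by (intro summable_suminf_not_top) auto
    then have "summable (\<lambda>n. Sn (Suc n) x - Sn n x)" by (rule summable_rabs_cancel)
    then have "convergent (\<lambda>m. \<Sum>n<m. Sn (Suc n) x - Sn n x)" by (simp add: summable_iff_convergent)
    then have "convergent (\<lambda>m. Sn m x - Sn 0 x)" using sum_lessThan_telescope[of "\<lambda>n. Sn n x"] by simp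
    then have "convergent (\<lambda>m. (Sn m x - Sn 0 x) + Sn 0 x)" by (intro convergent_add convergent_const)
    then have "convergent (\<lambda>m. Sn m x)" by simp
    then show "(\<lambda>n. Sn n x) \<longlonglongrightarrow> Y x" unfolding Y_def by (simp add: convergent_LIMSEQ_iff)
  qed
  have "L2_series M c W Y"
    unfolding L2_series_def
  proof (intro conjI allI impI Ym)
    fix \<epsilon> :: real assume "0 < \<epsilon>"
    obtain N where N: "(1/4::real)^N < \<epsilon>" using real_arch_pow_inv[OF \<open>0 < \<epsilon>\<close>, of "1/4"] by auto
    have qN: "q N * q N = (1/4)^N" by (simp add: q_def power_mult_distrib[symmetric])
    show "\<exists>F0. finite F0 \<and> (\<forall>F. finite F \<and> F0 \<subseteq> F \<longrightarrow>
        (\<integral>\<^sup>+ \<omega>. ennreal ((Y \<omega> - (\<Sum>u\<in>F. c u * W u \<omega>))\<^sup>2) \<partial>M) < ennreal \<epsilon>)"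
    proof (intro exI conjI allI impI)
      show "finite (K N)" by (rule Kfin)
      fix F assume F: "finite F \<and> K N \<subseteq> F"
      let ?SF = "\<lambda>x. \<Sum>u\<in>F. c u * W u x"
      have "(\<integral>\<^sup>+ x. ennreal ((Y x - ?SF x)\<^sup>2) \<partial>M) = (\<integral>\<^sup>+ x. liminf (\<lambda>m. ennreal ((Sn m x - ?SF x)\<^sup>2)) \<partial>M)"
      proof (rule nn_integral_cong_AE)
        show "AE x in M. ennreal ((Y x - ?SF x)\<^sup>2) = liminf (\<lambda>m. ennreal ((Sn m x - ?SF x)\<^sup>2))"
          using AEconv
        proof (rule AE_mp, intro AE_I2 impI)
          fix x assume "(\<lambda>n. Sn n x) \<longlonglongrightarrow> Y x"
          then have "(\<lambda>m. ennreal ((Sn m x - ?SF x)\<^sup>2)) \<longlonglongrightarrow> ennreal ((Y x - ?SF x)\<^sup>2)"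
            by (intro tendsto_ennrealI tendsto_intros)
          then show "ennreal ((Y x - ?SF x)\<^sup>2) = liminf (\<lambda>m. ennreal ((Sn m x - ?SF x)\<^sup>2))"
            by (rule lim_imp_Liminf[OF trivial_limit_sequentially, symmetric])
        qed
      qed
      also have "\<dots> \<le> liminf (\<lambda>m. \<integral>\<^sup>+ x. ennreal ((Sn m x - ?SF x)\<^sup>2) \<partial>M)"
        by (rule nn_integral_liminf) simp
      also have "\<dots> \<le> limsup (\<lambda>m. \<integral>\<^sup>+ x. ennreal ((Sn m x - ?SF x)\<^sup>2) \<partial>M)"
        by (rule Liminf_le_Limsup) simp
      also have "\<dots> \<le> ennreal (q N * q N)"
      proof (rule Limsup_bounded)
        show "\<forall>\<^sub>F m in sequentially. (\<integral>\<^sup>+ x. ennreal ((Sn m x - ?SF x)\<^sup>2) \<partial>M) \<le> ennreal (q N * q N)"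
        proof (rule eventually_sequentiallyI[of N])
          fix m assume "N \<le> m"
          then show "(\<integral>\<^sup>+ x. ennreal ((Sn m x - ?SF x)\<^sup>2) \<partial>M) \<le> ennreal (q N * q N)"
            using F by (intro diffb) auto
        qed
      qed
      also have "\<dots> < ennreal \<epsilon>"
        using N qN \<open>0 < \<epsilon>\<close> by (simp add: ennreal_lessI)
      finally show "(\<integral>\<^sup>+ x. ennreal ((Y x - ?SF x)\<^sup>2) \<partial>M) < ennreal \<epsilon>" .
    qed
  qed
  then show ?thesis by blast
qed


lemma cmod_iexp_diff: "cmod (iexp a - iexp b) \<le> \<bar>a - b\<bar>"
proof -
  have "iexp a = iexp b * iexp (a - b)"
    by (simp add: exp_add[symmetric] algebra_simps)
  then have "iexp a - iexp b = iexp b * (iexp (a - b) - 1)" by (simp add: algebra_simps)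
  then have "cmod (iexp a - iexp b) = cmod (iexp (a - b) - 1)"
    by (simp add: norm_mult norm_exp_i_times)
  also have "\<dots> \<le> \<bar>a - b\<bar>"
    using iexp_approx1[of "a - b" 0] by simp
  finally show ?thesis .
qed

lemma real_distribution_centered_normal:
  assumes "0 \<le> s" shows "real_distribution (centered_normal s)"
proof (cases "s = 0")
  case True then show ?thesis
    unfolding real_distribution_def real_distribution_axioms_def by (simp add: centered_normal_def prob_space_return)
next
  case False then show ?thesis
    unfolding real_distribution_def real_distribution_axioms_def using assms by (simp add: centered_normal_def prob_space_normal_density)
qed

lemma char_scaled_std:
  assumes P: "prob_space M" and D: "distributed M lborel Z std_normal_density"
  shows "char (distr M borel (\<lambda>\<omega>. a * Z \<omega>)) t = complex_of_real (exp (- ((t * a)\<^sup>2) / 2))"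
proof -
  have Zm[measurable]: "Z \<in> borel_measurable M" using distributed_measurable[OF D] by simp
  have "char (distr M borel (\<lambda>\<omega>. a * Z \<omega>)) t = (CLINT \<omega>|M. iexp (t * (a * Z \<omega>)))"
    unfolding char_def by (subst integral_distr) auto
  also have "\<dots> = (CLINT x|distr M lborel Z. iexp ((t * a) * x))"
    by (subst integral_distr) (auto simp: mult.assoc)
  also have "\<dots> = char std_normal_distribution (t * a)"
    using D by (simp add: distributed_def char_def)
  finally show ?thesis by (simp add: char_std_normal_distribution)
qed

lemma char_centered_normal:
  assumes "0 \<le> s"
  shows "char (centered_normal s) t = complex_of_real (exp (- (s * t\<^sup>2) / 2))"
proof (cases "s = 0")
  case True
  have m: "(\<lambda>x. iexp (t * x)) \<in> borel_measurable borel" by measurable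
  then show ?thesis using True by (simp add: centered_normal_def char_def integral_return)
next
  case False
  then have sp: "0 < sqrt s" using assms by simp
  let ?N = "std_normal_distribution"
  have P: "prob_space ?N" using prob_space_normal_density[of 1 0] by simp
  have D: "distributed ?N lborel (\<lambda>x. x) std_normal_density"
    unfolding distributed_def by (auto simp: distr_id2)
  have "distributed ?N lborel (\<lambda>x. 0 + sqrt s * x) (normal_density (0 + sqrt s * 0) (\<bar>sqrt s\<bar> * 1))"
    by (rule prob_space.normal_density_affine[OF P D]) (use sp in auto)
  then have eq: "distr ?N lborel (\<lambda>x. sqrt s * x) = density lborel (normal_density 0 (sqrt s))"
    using sp by (simp add: distributed_def)
  have "char (centered_normal s) t = char (distr ?N lborel (\<lambda>x. sqrt s * x)) t"
    using False by (simp add: centered_normal_def eq)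
  also have "\<dots> = char (distr ?N borel (\<lambda>x. sqrt s * x)) t"
    by (simp add: char_def integral_distr)
  also have "\<dots> = complex_of_real (exp (- ((t * sqrt s)\<^sup>2) / 2))"
    by (rule char_scaled_std[OF P D])
  also have "(t * sqrt s)\<^sup>2 = s * t\<^sup>2" using assms by (simp add: power_mult_distrib)
  finally show ?thesis .
qed

lemma char_iid_sum:
  assumes I: "iid_std_normal M Z" and H: "finite H"
  shows "char (distr M borel (\<lambda>\<omega>. \<Sum>w\<in>H. g w * Z w \<omega>)) t = complex_of_real (exp (- (t\<^sup>2 * (\<Sum>w\<in>H. (g w)\<^sup>2)) / 2))"
proof -
  have P: "prob_space M" and Ind: "prob_space.indep_vars M (\<lambda>_. borel) Z UNIV"
    and D: "\<And>u. distributed M lborel (Z u) std_normal_density"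
    using I by (auto simp: iid_std_normal_def)
  have Ind2: "prob_space.indep_vars M (\<lambda>_. borel) (\<lambda>w \<omega>. g w * Z w \<omega>) H"
    using prob_space.indep_vars_compose2[OF P prob_space.indep_vars_subset[OF P Ind, of H], of "\<lambda>w x. g w * x" "\<lambda>_. borel"]
    by simp
  have "char (distr M borel (\<lambda>\<omega>. \<Sum>w\<in>H. g w * Z w \<omega>)) t = (\<Prod>w\<in>H. char (distr M borel (\<lambda>\<omega>. g w * Z w \<omega>)) t)"
    by (rule prob_space.char_distr_sum[OF P Ind2])
  also have "\<dots> = (\<Prod>w\<in>H. complex_of_real (exp (- ((t * g w)\<^sup>2) / 2)))"
    by (intro prod.cong refl char_scaled_std[OF P D])
  also have "\<dots> = complex_of_real (exp (\<Sum>w\<in>H. - ((t * g w)\<^sup>2) / 2))"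
    using H by (simp add: exp_sum)
  also have "(\<Sum>w\<in>H. - ((t * g w)\<^sup>2) / 2) = - (t\<^sup>2 * (\<Sum>w\<in>H. (g w)\<^sup>2)) / 2"
    by (simp add: power_mult_distrib sum_distrib_left sum_divide_distrib[symmetric] sum_negf)
  finally show ?thesis .
qed

lemma char_close:
  assumes P: "prob_space M" and [measurable]: "Y \<in> borel_measurable M" "T \<in> borel_measurable M"
    and L: "(\<integral>\<^sup>+x. ennreal ((Y x - T x)\<^sup>2) \<partial>M) \<le> ennreal (e\<^sup>2)" and e: "0 < e"
  shows "norm (char (distr M borel Y) t - char (distr M borel T) t) \<le> \<bar>t\<bar> * e"
proof -
  have i1: "integrable M (\<lambda>x. iexp (t * Y x))" and i2: "integrable M (\<lambda>x. iexp (t * T x))"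
    by (auto intro!: prob_space.integrable_iexp[OF P])
  have "char (distr M borel Y) t - char (distr M borel T) t = (CLINT x|M. iexp (t * Y x) - iexp (t * T x))"
  proof -
    have c1: "char (distr M borel Y) t = (CLINT x|M. iexp (t * Y x))"
      unfolding char_def by (rule integral_distr) auto
    have c2: "char (distr M borel T) t = (CLINT x|M. iexp (t * T x))"
      unfolding char_def by (rule integral_distr) auto
    show ?thesis unfolding c1 c2 by (rule Bochner_Integration.integral_diff[OF i1 i2, symmetric])
  qed
  then have "ennreal (norm (char (distr M borel Y) t - char (distr M borel T) t))
      \<le> (\<integral>\<^sup>+x. norm (iexp (t * Y x) - iexp (t * T x)) \<partial>M)"
    using integral_norm_bound_ennreal[OF Bochner_Integration.integrable_diff[OF i1 i2]] by simp
  also have "\<dots> \<le> (\<integral>\<^sup>+x. ennreal \<bar>t\<bar> * ennreal \<bar>Y x - T x\<bar> \<partial>M)"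
  proof (intro nn_integral_mono)
    fix x
    have "norm (iexp (t * Y x) - iexp (t * T x)) \<le> \<bar>t * Y x - t * T x\<bar>" by (rule cmod_iexp_diff)
    also have "\<dots> = \<bar>t\<bar> * \<bar>Y x - T x\<bar>" by (simp add: abs_mult[symmetric] right_diff_distrib)
    finally show "ennreal (norm (iexp (t * Y x) - iexp (t * T x))) \<le> ennreal \<bar>t\<bar> * ennreal \<bar>Y x - T x\<bar>"
      by (simp add: ennreal_mult[symmetric] ennreal_leI)
  qed
  also have "\<dots> = ennreal \<bar>t\<bar> * (\<integral>\<^sup>+x. ennreal \<bar>Y x - T x\<bar> \<partial>M)"
    by (simp add: nn_integral_cmult)
  also have "\<dots> \<le> ennreal \<bar>t\<bar> * ennreal e"
    by (intro mult_left_mono L1_from_L2[OF P _ L e]) auto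
  also have "\<dots> = ennreal (\<bar>t\<bar> * e)" using e by (simp add: ennreal_mult)
  finally show ?thesis using e by (simp add: ennreal_le_iff)
qed


lemma gauss_limit:
  fixes g :: "'v \<Rightarrow> real"
  assumes I: "iid_std_normal M Z" and Ym[measurable]: "Y \<in> borel_measurable M"
    and A: "\<And>\<epsilon>. 0 < \<epsilon> \<Longrightarrow> \<exists>H0. finite H0 \<and> (\<forall>H. finite H \<and> H0 \<subseteq> H \<longrightarrow>
        (\<integral>\<^sup>+x. ennreal ((Y x - (\<Sum>w\<in>H. g w * Z w x))\<^sup>2) \<partial>M) < ennreal \<epsilon> \<and> \<bar>(\<Sum>w\<in>H. (g w)\<^sup>2) - s\<bar> < \<epsilon>)"
  shows "distr M borel Y = centered_normal s"
proof -
  have P: "prob_space M" using I by (simp add: iid_std_normal_def)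
  have Zm[measurable]: "Z u \<in> borel_measurable M" for u by (rule iid_meas[OF I])
  define r where "r n = inverse (real (Suc n))" for n
  have rpos: "0 < r n" for n by (simp add: r_def)
  have r0: "r \<longlonglongrightarrow> 0" unfolding r_def by (rule LIMSEQ_inverse_real_of_nat)
  have "\<forall>n. \<exists>H. finite H \<and> (\<integral>\<^sup>+x. ennreal ((Y x - (\<Sum>w\<in>H. g w * Z w x))\<^sup>2) \<partial>M) < ennreal (r n) \<and> \<bar>(\<Sum>w\<in>H. (g w)\<^sup>2) - s\<bar> < r n"
  proof
    fix n
    obtain H0 where "finite H0" "\<forall>H. finite H \<and> H0 \<subseteq> H \<longrightarrow>
        (\<integral>\<^sup>+x. ennreal ((Y x - (\<Sum>w\<in>H. g w * Z w x))\<^sup>2) \<partial>M) < ennreal (r n) \<and> \<bar>(\<Sum>w\<in>H. (g w)\<^sup>2) - s\<bar> < r n"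
      using A[OF rpos[of n]] by blast
    then show "\<exists>H. finite H \<and> (\<integral>\<^sup>+x. ennreal ((Y x - (\<Sum>w\<in>H. g w * Z w x))\<^sup>2) \<partial>M) < ennreal (r n) \<and> \<bar>(\<Sum>w\<in>H. (g w)\<^sup>2) - s\<bar> < r n"
      by blast
  qed
  from choice[OF this] obtain Hs where Hs: "\<forall>n. finite (Hs n) \<and> (\<integral>\<^sup>+x. ennreal ((Y x - (\<Sum>w\<in>Hs n. g w * Z w x))\<^sup>2) \<partial>M) < ennreal (r n) \<and> \<bar>(\<Sum>w\<in>Hs n. (g w)\<^sup>2) - s\<bar> < r n"
    by blast
  define T where "T n x = (\<Sum>w\<in>Hs n. g w * Z w x)" for n x
  define sn where "sn n = (\<Sum>w\<in>Hs n. (g w)\<^sup>2)" for n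
  have Tm[measurable]: "T n \<in> borel_measurable M" for n unfolding T_def by measurable
  have sn_lim: "sn \<longlonglongrightarrow> s"
  proof (rule tendsto_sandwich[of "\<lambda>n. s - r n" sn sequentially "\<lambda>n. s + r n"])
    have hb: "\<bar>sn n - s\<bar> < r n" for n using Hs by (simp add: sn_def)
    show "\<forall>\<^sub>F n in sequentially. s - r n \<le> sn n"
      by (intro always_eventually allI) (use hb in \<open>smt (verit)\<close>)
    show "\<forall>\<^sub>F n in sequentially. sn n \<le> s + r n"
      by (intro always_eventually allI) (use hb in \<open>smt (verit)\<close>)
    show "(\<lambda>n. s - r n) \<longlonglongrightarrow> s" using tendsto_diff[OF tendsto_const r0, of s] by simp
    show "(\<lambda>n. s + r n) \<longlonglongrightarrow> s" using tendsto_add[OF tendsto_const r0, of s] by simp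
  qed
  have s0: "0 \<le> s"
    by (rule LIMSEQ_le_const[OF sn_lim]) (auto simp: sn_def intro!: sum_nonneg)
  have "char (distr M borel Y) t = char (centered_normal s) t" for t
  proof -
    have c1: "(\<lambda>n. char (distr M borel (T n)) t) \<longlonglongrightarrow> complex_of_real (exp (- (s * t\<^sup>2) / 2))"
    proof -
      have "(\<lambda>n. complex_of_real (exp (- (t\<^sup>2 * sn n) / 2))) \<longlonglongrightarrow> complex_of_real (exp (- (t\<^sup>2 * s) / 2))"
        by (intro tendsto_intros sn_lim) auto
      moreover have "char (distr M borel (T n)) t = complex_of_real (exp (- (t\<^sup>2 * sn n) / 2))" for n
        unfolding T_def sn_def by (rule char_iid_sum[OF I]) (use Hs in auto)
      ultimately show ?thesis by (simp add: mult.commute)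
    qed
    have bnd: "norm (char (distr M borel Y) t - char (distr M borel (T n)) t) \<le> \<bar>t\<bar> * sqrt (r n)" for n
    proof (rule char_close[OF P Ym Tm])
      show "(\<integral>\<^sup>+x. ennreal ((Y x - T n x)\<^sup>2) \<partial>M) \<le> ennreal ((sqrt (r n))\<^sup>2)"
      proof -
        have "(\<integral>\<^sup>+x. ennreal ((Y x - T n x)\<^sup>2) \<partial>M) < ennreal (r n)"
          using Hs unfolding T_def by blast
        moreover have "(sqrt (r n))\<^sup>2 = r n" using rpos[of n] by simp
        ultimately show ?thesis by simp
      qed
    qed (use rpos in simp)
    have "(\<lambda>n. \<bar>t\<bar> * sqrt (r n)) \<longlonglongrightarrow> \<bar>t\<bar> * sqrt 0"
      by (intro tendsto_intros r0)
    have z: "(\<lambda>n. char (distr M borel Y) t - char (distr M borel (T n)) t) \<longlonglongrightarrow> 0"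
    proof (rule Lim_null_comparison)
      show "\<forall>\<^sub>F n in sequentially. norm (char (distr M borel Y) t - char (distr M borel (T n)) t) \<le> \<bar>t\<bar> * sqrt (r n)"
        by (intro always_eventually allI bnd)
      show "(\<lambda>n. \<bar>t\<bar> * sqrt (r n)) \<longlonglongrightarrow> 0" using \<open>(\<lambda>n. \<bar>t\<bar> * sqrt (r n)) \<longlonglongrightarrow> \<bar>t\<bar> * sqrt 0\<close> by simp
    qed
    have "(\<lambda>n. char (distr M borel Y) t - (char (distr M borel Y) t - char (distr M borel (T n)) t)) \<longlonglongrightarrow> char (distr M borel Y) t - 0"
      by (intro tendsto_intros z)
    then have c2: "(\<lambda>n. char (distr M borel (T n)) t) \<longlonglongrightarrow> char (distr M borel Y) t" by simp
    from LIMSEQ_unique[OF c2 c1] show ?thesis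
      using char_centered_normal[OF s0] by simp
  qed
  then have "char (distr M borel Y) = char (centered_normal s)" by auto
  then show ?thesis
    by (intro Levy_uniqueness prob_space.real_distribution_distr[OF P] real_distribution_centered_normal s0) auto
qed


lemma combo_L2:
  fixes X S :: "'v \<Rightarrow> 'w \<Rightarrow> real"
  assumes fin: "finite F" and Xm: "\<And>v. X v \<in> borel_measurable M" and Sm: "\<And>v. S v \<in> borel_measurable M"
    and bnd: "\<And>v. v \<in> F \<Longrightarrow> (\<integral>\<^sup>+x. ennreal ((X v x - S v x)\<^sup>2) \<partial>M) \<le> ennreal \<delta>" and d0: "0 \<le> \<delta>"
  shows "(\<integral>\<^sup>+x. ennreal (((\<Sum>v\<in>F. a v * X v x) - (\<Sum>v\<in>F. a v * S v x))\<^sup>2) \<partial>M)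
     \<le> ennreal ((\<Sum>v\<in>F. (a v)\<^sup>2) * (real (card F) * \<delta>))"
proof -
  let ?A = "\<Sum>v\<in>F. (a v)\<^sup>2"
  have A0: "0 \<le> ?A" by (intro sum_nonneg) auto
  have pt: "ennreal (((\<Sum>v\<in>F. a v * X v x) - (\<Sum>v\<in>F. a v * S v x))\<^sup>2)
      \<le> ennreal ?A * (\<Sum>v\<in>F. ennreal ((X v x - S v x)\<^sup>2))" for x
  proof -
    have "((\<Sum>v\<in>F. a v * X v x) - (\<Sum>v\<in>F. a v * S v x))\<^sup>2 = (\<Sum>v\<in>F. a v * (X v x - S v x))\<^sup>2"
      by (simp add: sum_subtractf right_diff_distrib)
    also have "\<dots> \<le> ?A * (\<Sum>v\<in>F. (X v x - S v x)\<^sup>2)"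
      by (rule Cauchy_Schwarz_ineq_sum)
    finally have "ennreal (((\<Sum>v\<in>F. a v * X v x) - (\<Sum>v\<in>F. a v * S v x))\<^sup>2) \<le> ennreal (?A * (\<Sum>v\<in>F. (X v x - S v x)\<^sup>2))"
      by (rule ennreal_leI)
    also have "\<dots> = ennreal ?A * ennreal (\<Sum>v\<in>F. (X v x - S v x)\<^sup>2)"
      by (rule ennreal_mult) (auto intro!: sum_nonneg A0)
    also have "ennreal (\<Sum>v\<in>F. (X v x - S v x)\<^sup>2) = (\<Sum>v\<in>F. ennreal ((X v x - S v x)\<^sup>2))"
      by (rule sum_ennreal[symmetric]) auto
    finally show ?thesis .
  qed
  have "(\<integral>\<^sup>+x. ennreal (((\<Sum>v\<in>F. a v * X v x) - (\<Sum>v\<in>F. a v * S v x))\<^sup>2) \<partial>M)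
      \<le> (\<integral>\<^sup>+x. ennreal ?A * (\<Sum>v\<in>F. ennreal ((X v x - S v x)\<^sup>2)) \<partial>M)"
    by (intro nn_integral_mono pt)
  also have "\<dots> = ennreal ?A * (\<Sum>v\<in>F. \<integral>\<^sup>+x. ennreal ((X v x - S v x)\<^sup>2) \<partial>M)"
    using Xm Sm by (simp add: nn_integral_cmult nn_integral_sum del: sum_ennreal)
  also have "\<dots> \<le> ennreal ?A * (\<Sum>v\<in>F. ennreal \<delta>)"
    by (intro mult_left_mono sum_mono bnd) auto
  also have "\<dots> = ennreal (?A * (real (card F) * \<delta>))"
    using A0 d0 by (simp add: ennreal_mult ennreal_of_nat_eq_real_of_nat)
  finally show ?thesis .
qed

lemma BB_shift:
  assumes "graph_aut E \<Phi>" "\<Phi> r = v"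
  shows "BB E d r u = BB E d v (\<Phi> u)"
  using BB_aut[OF assms(1), of d r u] assms(2) by simp

lemma reindex_aut_sum:
  assumes "graph_aut E \<Phi>" "\<Phi> r = v" "finite H"
  shows "(\<Sum>u\<in>\<Phi> -` H. BB E d r u * Z (\<Phi> u) x) = (\<Sum>w\<in>H. BB E d v w * Z w x)"
proof -
  have b: "bij \<Phi>" using assms(1) by (simp add: graph_aut_def)
  then have inj: "inj \<Phi>" by (simp add: bij_def)
  have s: "range \<Phi> = UNIV" using b by (simp add: bij_def)
  have img: "\<Phi> ` (\<Phi> -` H) = H" by (simp add: image_vimage_eq s)
  have "(\<Sum>w\<in>H. BB E d v w * Z w x) = (\<Sum>w\<in>\<Phi> ` (\<Phi> -` H). BB E d v w * Z w x)" by (simp only: img)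
  also have "\<dots> = (\<Sum>u\<in>\<Phi> -` H. BB E d v (\<Phi> u) * Z (\<Phi> u) x)"
    by (rule sum.reindex_cong[OF inj_on_subset[OF inj subset_UNIV] refl]) simp
  also have "\<dots> = (\<Sum>u\<in>\<Phi> -` H. BB E d r u * Z (\<Phi> u) x)"
    by (intro sum.cong refl) (simp add: BB_shift[OF assms(1,2)])
  finally show ?thesis by simp
qed

lemma has_sum_eventually:
  fixes f :: "'a \<Rightarrow> real"
  assumes "(f has_sum S) UNIV" "0 < e"
  shows "\<exists>H. finite H \<and> (\<forall>H'. finite H' \<and> H \<subseteq> H' \<longrightarrow> \<bar>sum f H' - S\<bar> < e)"
proof -
  have t: "(sum f \<longlongrightarrow> S) (finite_subsets_at_top UNIV)" using assms(1) unfolding has_sum_def .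
  have "eventually (\<lambda>F. dist (sum f F) S < e) (finite_subsets_at_top UNIV)"
    using tendstoD[OF t assms(2)] .
  then obtain X where X: "finite X" "\<And>Y. finite Y \<Longrightarrow> X \<subseteq> Y \<Longrightarrow> dist (sum f Y) S < e"
    unfolding eventually_finite_subsets_at_top by auto
  show ?thesis
    by (rule exI[of _ X]) (use X in \<open>auto simp: dist_real_def\<close>)
qed

lemma arith_aux:
  fixes A c e :: real
  assumes "0 \<le> A" "0 \<le> c" "0 < e"
  shows "A * (c * (e / ((A + 1) * (c + 1)))) < e"
proof -
  have "0 \<le> A * c" using assms by simp
  then have "A * c < (A + 1) * (c + 1)" using assms by (simp add: algebra_simps)
  moreover have "0 < (A + 1) * (c + 1)" using assms by simp
  ultimately have "A * c / ((A + 1) * (c + 1)) < 1" by (simp add: divide_less_eq)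
  then have "e * (A * c / ((A + 1) * (c + 1))) < e * 1" using assms by (intro mult_strict_left_mono) auto
  moreover have "A * (c * (e / ((A + 1) * (c + 1)))) = e * (A * c / ((A + 1) * (c + 1)))" by simp
  ultimately show ?thesis by (simp add: mult_ac)
qed

lemma gff_from_L2:
  assumes dr: "d_regular_graph E d" and tr: "transient E d" and I: "iid_std_normal M Z"
    and aut: "\<And>v. graph_aut E (\<Phi> v) \<and> \<Phi> v r = v"
    and L: "\<And>v. L2_series M (\<lambda>u. BB E d r u) (\<lambda>u. Z (\<Phi> v u)) (X v)"
  shows "is_GFF E d M X"
proof -
  have P: "prob_space M" using I by (simp add: iid_std_normal_def)
  have Zm[measurable]: "\<And>u. Z u \<in> borel_measurable M" by (rule iid_meas[OF I])
  have Xm[measurable]: "\<And>v. X v \<in> borel_measurable M" using L by (simp add: L2_series_def)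
  have inj: "inj (\<Phi> v)" for v using aut[of v] by (simp add: graph_aut_def bij_def)
  show ?thesis unfolding is_GFF_def
  proof (intro conjI allI impI)
    show "X v \<in> borel_measurable M" for v by (rule Xm)
    fix F :: "'a set" and a :: "'a \<Rightarrow> real" assume fin: "finite F"
    define g where "g w = (\<Sum>v\<in>F. a v * BB E d v w)" for w
    define s where "s = (\<Sum>u\<in>F. \<Sum>v\<in>F. a u * a v * green E d u v)"
    have "distr M borel (\<lambda>\<omega>. \<Sum>v\<in>F. a v * X v \<omega>) = centered_normal s"
    proof (rule gauss_limit[OF I, where g=g])
      show "(\<lambda>\<omega>. \<Sum>v\<in>F. a v * X v \<omega>) \<in> borel_measurable M" by measurable
      fix \<epsilon> :: real assume \<epsilon>: "0 < \<epsilon>"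
      define A where "A = (\<Sum>v\<in>F. (a v)\<^sup>2)"
      have A0: "0 \<le> A" unfolding A_def by (intro sum_nonneg) auto
      define \<delta> where "\<delta> = \<epsilon> / ((A + 1) * (real (card F) + 1))"
      have \<delta>pos: "0 < \<delta>" unfolding \<delta>_def using A0 \<epsilon> by (intro divide_pos_pos mult_pos_pos) auto
      have "\<forall>v. \<exists>F0. finite F0 \<and> (\<forall>F'. finite F' \<and> F0 \<subseteq> F' \<longrightarrow>
          (\<integral>\<^sup>+\<omega>. ennreal ((X v \<omega> - (\<Sum>u\<in>F'. BB E d r u * Z (\<Phi> v u) \<omega>))\<^sup>2) \<partial>M) < ennreal \<delta>)"
      proof
        fix v
        show "\<exists>F0. finite F0 \<and> (\<forall>F'. finite F' \<and> F0 \<subseteq> F' \<longrightarrow>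
          (\<integral>\<^sup>+\<omega>. ennreal ((X v \<omega> - (\<Sum>u\<in>F'. BB E d r u * Z (\<Phi> v u) \<omega>))\<^sup>2) \<partial>M) < ennreal \<delta>)"
          using conjunct2[OF L[of v, unfolded L2_series_def], rule_format, OF \<delta>pos] .
      qed
      from choice[OF this] obtain F0 where F0: "\<forall>v. finite (F0 v) \<and> (\<forall>F'. finite F' \<and> F0 v \<subseteq> F' \<longrightarrow>
          (\<integral>\<^sup>+\<omega>. ennreal ((X v \<omega> - (\<Sum>u\<in>F'. BB E d r u * Z (\<Phi> v u) \<omega>))\<^sup>2) \<partial>M) < ennreal \<delta>)"
        by blast
      define C where "C = (\<Sum>v\<in>F. \<bar>a v\<bar>)\<^sup>2 + 1"
      have Cpos: "0 < C" unfolding C_def by (simp add: add_nonneg_pos)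
      have "\<forall>p. \<exists>H. finite H \<and> (\<forall>H'. finite H' \<and> H \<subseteq> H' \<longrightarrow>
          \<bar>(\<Sum>w\<in>H'. BB E d (fst p) w * BB E d (snd p) w) - green E d (fst p) (snd p)\<bar> < \<epsilon> / C)"
        using has_sum_eventually[OF BB_has_sum[OF dr tr]] \<epsilon> Cpos by simp
      from choice[OF this] obtain H2 where H2: "\<forall>p. finite (H2 p) \<and> (\<forall>H'. finite H' \<and> H2 p \<subseteq> H' \<longrightarrow>
          \<bar>(\<Sum>w\<in>H'. BB E d (fst p) w * BB E d (snd p) w) - green E d (fst p) (snd p)\<bar> < \<epsilon> / C)"
        by blast
      define H0 where "H0 = (\<Union>v\<in>F. \<Phi> v ` F0 v) \<union> (\<Union>p\<in>F \<times> F. H2 p)"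
      show "\<exists>H0. finite H0 \<and> (\<forall>H. finite H \<and> H0 \<subseteq> H \<longrightarrow>
        (\<integral>\<^sup>+x. ennreal (((\<Sum>v\<in>F. a v * X v x) - (\<Sum>w\<in>H. g w * Z w x))\<^sup>2) \<partial>M) < ennreal \<epsilon> \<and>
        \<bar>(\<Sum>w\<in>H. (g w)\<^sup>2) - s\<bar> < \<epsilon>)"
      proof (intro exI[of _ H0] conjI allI impI)
        show "finite H0" unfolding H0_def using fin F0 H2 by auto
        fix H assume H: "finite H \<and> H0 \<subseteq> H"
        define S where "S v \<omega> = (\<Sum>w\<in>H. BB E d v w * Z w \<omega>)" for v \<omega>
        have Sm: "S v \<in> borel_measurable M" for v unfolding S_def by measurable
        have bndv: "(\<integral>\<^sup>+\<omega>. ennreal ((X v \<omega> - S v \<omega>)\<^sup>2) \<partial>M) \<le> ennreal \<delta>" if v: "v \<in> F" for v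
        proof -
          have sub: "F0 v \<subseteq> \<Phi> v -` H" using H v unfolding H0_def by auto
          have fv: "finite (\<Phi> v -` H)" using H inj[of v] by (auto intro: finite_vimageI)
          have "(\<integral>\<^sup>+\<omega>. ennreal ((X v \<omega> - (\<Sum>u\<in>\<Phi> v -` H. BB E d r u * Z (\<Phi> v u) \<omega>))\<^sup>2) \<partial>M) < ennreal \<delta>"
            using F0 sub fv by blast
          moreover have "(\<Sum>u\<in>\<Phi> v -` H. BB E d r u * Z (\<Phi> v u) \<omega>) = S v \<omega>" for \<omega>
            unfolding S_def using aut[of v] H by (intro reindex_aut_sum) auto
          ultimately show ?thesis by simp
        qed
        have sumeq: "(\<Sum>w\<in>H. g w * Z w \<omega>) = (\<Sum>v\<in>F. a v * S v \<omega>)" for \<omega>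
        proof -
          have "(\<Sum>w\<in>H. g w * Z w \<omega>) = (\<Sum>w\<in>H. \<Sum>v\<in>F. a v * (BB E d v w * Z w \<omega>))"
            unfolding g_def by (simp add: sum_distrib_right mult.assoc)
          also have "\<dots> = (\<Sum>v\<in>F. \<Sum>w\<in>H. a v * (BB E d v w * Z w \<omega>))"
            by (rule sum.swap)
          also have "\<dots> = (\<Sum>v\<in>F. a v * S v \<omega>)"
            unfolding S_def by (simp add: sum_distrib_left)
          finally show ?thesis .
        qed
        have "(\<integral>\<^sup>+x. ennreal (((\<Sum>v\<in>F. a v * X v x) - (\<Sum>w\<in>H. g w * Z w x))\<^sup>2) \<partial>M)
            = (\<integral>\<^sup>+x. ennreal (((\<Sum>v\<in>F. a v * X v x) - (\<Sum>v\<in>F. a v * S v x))\<^sup>2) \<partial>M)"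
          by (simp add: sumeq)
        also have "\<dots> \<le> ennreal (A * (real (card F) * \<delta>))"
          unfolding A_def by (rule combo_L2[OF fin Xm Sm bndv]) (use \<delta>pos in auto)
        also have "\<dots> < ennreal \<epsilon>"
          using arith_aux[OF A0 _ \<epsilon>, of "real (card F)"] \<epsilon> by (simp add: \<delta>_def ennreal_lessI)
        finally show "(\<integral>\<^sup>+x. ennreal (((\<Sum>v\<in>F. a v * X v x) - (\<Sum>w\<in>H. g w * Z w x))\<^sup>2) \<partial>M) < ennreal \<epsilon>" .
        define D where "D u v = (\<Sum>w\<in>H. BB E d u w * BB E d v w) - green E d u v" for u v
        have Dle: "\<bar>D u v\<bar> \<le> \<epsilon> / C" if "u \<in> F" "v \<in> F" for u v
        proof -
          have sub: "H2 (u, v) \<subseteq> H" using H that unfolding H0_def by blast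
          have "\<forall>H'. finite H' \<and> H2 (u, v) \<subseteq> H' \<longrightarrow>
              \<bar>(\<Sum>w\<in>H'. BB E d u w * BB E d v w) - green E d u v\<bar> < \<epsilon> / C"
            using spec[OF H2, of "(u, v)"] by simp
          then have "\<bar>D u v\<bar> < \<epsilon> / C" unfolding D_def using sub H by simp
          then show ?thesis by simp
        qed
        have gsq: "(g w)\<^sup>2 = (\<Sum>u\<in>F. \<Sum>v\<in>F. a u * a v * (BB E d u w * BB E d v w))" for w
          unfolding g_def by (simp add: power2_eq_square sum_product mult_ac)
        have "(\<Sum>w\<in>H. (g w)\<^sup>2) = (\<Sum>u\<in>F. \<Sum>v\<in>F. a u * a v * (\<Sum>w\<in>H. BB E d u w * BB E d v w))"
        proof -
          have "(\<Sum>w\<in>H. (g w)\<^sup>2) = (\<Sum>w\<in>H. \<Sum>u\<in>F. \<Sum>v\<in>F. a u * a v * (BB E d u w * BB E d v w))"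
            by (simp add: gsq)
          also have "\<dots> = (\<Sum>u\<in>F. \<Sum>w\<in>H. \<Sum>v\<in>F. a u * a v * (BB E d u w * BB E d v w))"
            by (rule sum.swap)
          also have "\<dots> = (\<Sum>u\<in>F. \<Sum>v\<in>F. \<Sum>w\<in>H. a u * a v * (BB E d u w * BB E d v w))"
            by (intro sum.cong refl sum.swap)
          also have "\<dots> = (\<Sum>u\<in>F. \<Sum>v\<in>F. a u * a v * (\<Sum>w\<in>H. BB E d u w * BB E d v w))"
            by (simp add: sum_distrib_left)
          finally show ?thesis .
        qed
        then have "(\<Sum>w\<in>H. (g w)\<^sup>2) - s = (\<Sum>u\<in>F. \<Sum>v\<in>F. a u * a v * D u v)"
          by (simp add: s_def D_def right_diff_distrib sum_subtractf)
        then have "\<bar>(\<Sum>w\<in>H. (g w)\<^sup>2) - s\<bar> = \<bar>\<Sum>u\<in>F. \<Sum>v\<in>F. a u * a v * D u v\<bar>" by simp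
        also have "\<dots> \<le> (\<Sum>u\<in>F. \<bar>\<Sum>v\<in>F. a u * a v * D u v\<bar>)"
          by (rule sum_abs)
        also have "\<dots> \<le> (\<Sum>u\<in>F. \<Sum>v\<in>F. \<bar>a u * a v * D u v\<bar>)"
          by (intro sum_mono sum_abs)
        also have "\<dots> \<le> (\<Sum>u\<in>F. \<Sum>v\<in>F. \<bar>a u\<bar> * \<bar>a v\<bar> * (\<epsilon> / C))"
        proof (intro sum_mono)
          fix u v assume uv: "u \<in> F" "v \<in> F"
          have "\<bar>a u * a v * D u v\<bar> = (\<bar>a u\<bar> * \<bar>a v\<bar>) * \<bar>D u v\<bar>" by (simp add: abs_mult)
          also have "\<dots> \<le> (\<bar>a u\<bar> * \<bar>a v\<bar>) * (\<epsilon> / C)"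
            by (rule mult_left_mono[OF Dle[OF uv]]) simp
          finally show "\<bar>a u * a v * D u v\<bar> \<le> \<bar>a u\<bar> * \<bar>a v\<bar> * (\<epsilon> / C)" .
        qed
        also have "\<dots> = (\<Sum>v\<in>F. \<bar>a v\<bar>)\<^sup>2 * (\<epsilon> / C)"
        proof -
          have "(\<Sum>v\<in>F. \<bar>a v\<bar>)\<^sup>2 = (\<Sum>u\<in>F. \<Sum>v\<in>F. \<bar>a u\<bar> * \<bar>a v\<bar>)"
            by (simp add: power2_eq_square sum_product)
          then show ?thesis by (simp add: sum_distrib_right sum_divide_distrib)
        qed
        also have "\<dots> < C * (\<epsilon> / C)"
          using \<epsilon> Cpos by (intro mult_strict_right_mono) (auto simp: C_def)
        also have "\<dots> = \<epsilon>" using Cpos by simp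
        finally show "\<bar>(\<Sum>w\<in>H. (g w)\<^sup>2) - s\<bar> < \<epsilon>" .
      qed
    qed
    then show "distr M borel (\<lambda>\<omega>. \<Sum>v\<in>F. a v * X v \<omega>) = centered_normal (\<Sum>u\<in>F. \<Sum>v\<in>F. a u * a v * green E d u v)"
      by (simp add: s_def)
  qed
qed

theorem mainTheorem15:
  fixes E :: "'v \<Rightarrow> 'v \<Rightarrow> bool" and d :: nat and r :: 'v
  assumes "d_regular_graph E d" and "connected_graph E"
    and "vertex_transitive E" and "transient E d"
  shows "\<exists>\<beta> :: 'v \<Rightarrow> real.
     (\<lambda>u. (\<beta> u)\<^sup>2) summable_on UNIV \<and>
     (\<forall>\<phi>. graph_aut E \<phi> \<and> \<phi> r = r \<longrightarrow> (\<forall>u. \<beta> (\<phi> u) = \<beta> u)) \<and>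
     (\<forall>(M :: 'w measure) Z (\<Phi> :: 'v \<Rightarrow> 'v \<Rightarrow> 'v).
        iid_std_normal M Z \<and> (\<forall>v. graph_aut E (\<Phi> v) \<and> \<Phi> v r = v) \<longrightarrow>
        (\<exists>X. \<forall>v. L2_series M (\<lambda>u. \<beta> u) (\<lambda>u. Z (\<Phi> v u)) (X v)) \<and>
        (\<forall>X. (\<forall>v. L2_series M (\<lambda>u. \<beta> u) (\<lambda>u. Z (\<Phi> v u)) (X v)) \<longrightarrow> is_GFF E d M X))"
proof -
  note dr = assms(1) and tr = assms(4)
  define \<beta> where "\<beta> = BB E d r"
  have hs: "((\<lambda>u. (\<beta> u)\<^sup>2) has_sum green E d r r) UNIV"
    using BB_has_sum[OF dr tr, of r r] by (simp add: \<beta>_def power2_eq_square)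
  have inv: "\<beta> (\<phi> u) = \<beta> u" if "graph_aut E \<phi> \<and> \<phi> r = r" for \<phi> u
    using BB_aut[of E \<phi> d r u] that by (simp add: \<beta>_def)
  have main: "(\<exists>X. \<forall>v. L2_series M (\<lambda>u. \<beta> u) (\<lambda>u. Z (\<Phi> v u)) (X v)) \<and>
        (\<forall>X. (\<forall>v. L2_series M (\<lambda>u. \<beta> u) (\<lambda>u. Z (\<Phi> v u)) (X v)) \<longrightarrow> is_GFF E d M X)"
    if H: "iid_std_normal M Z \<and> (\<forall>v. graph_aut E (\<Phi> v) \<and> \<Phi> v r = v)"
    for M :: "'w measure" and Z and \<Phi> :: "'v \<Rightarrow> 'v \<Rightarrow> 'v"
  proof
    have I: "iid_std_normal M Z" and aut: "\<And>v. graph_aut E (\<Phi> v) \<and> \<Phi> v r = v" using H by auto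
    have P: "prob_space M" using I by (simp add: iid_std_normal_def)
    have inj: "inj (\<Phi> v)" for v using aut[of v] by (simp add: graph_aut_def bij_def)
    have "\<forall>v. \<exists>Y. L2_series M (\<lambda>u. \<beta> u) (\<lambda>u. Z (\<Phi> v u)) Y"
      using L2_exists[OF P iid_orthonormal[OF I inj] hs] by blast
    then show "\<exists>X. \<forall>v. L2_series M (\<lambda>u. \<beta> u) (\<lambda>u. Z (\<Phi> v u)) (X v)"
      by (rule choice)
    show "\<forall>X. (\<forall>v. L2_series M (\<lambda>u. \<beta> u) (\<lambda>u. Z (\<Phi> v u)) (X v)) \<longrightarrow> is_GFF E d M X"
    proof (intro allI impI)
      fix X assume L: "\<forall>v. L2_series M (\<lambda>u. \<beta> u) (\<lambda>u. Z (\<Phi> v u)) (X v)"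
      show "is_GFF E d M X"
        by (rule gff_from_L2[OF dr tr I aut]) (use L in \<open>simp add: \<beta>_def\<close>)
    qed
  qed
  show ?thesis
    by (rule exI[of _ \<beta>]) (use has_sum_imp_summable[OF hs] inv main in blast)
qed


end
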